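(* Let $n\ge 2$ be odd, $\pi=A_1\cdots A_n\in\mathbb{S}_{2n}$ with $A_i=(2i-1\ \ 2i)$, and $\mathcal{O}_\pi$ its conjugacy class. If $\rho=\chi_{(n)}\otimes\epsilon$ or $\rho=\chi_{(n)}\otimes\mathrm{sgn}$, then the braiding of $M(\mathcal{O}_\pi,\rho)$ is negative.
   Context: Permutations are composed right to left. For a finite group $G$, a conjugacy class $\mathcal{C}$, a fixed $s\in\mathcal{C}$ with centralizer $G^s$ and an irreducible representation $(\rho,V)$ of $G^s$, $M(\mathcal{C},\rho)$ is the irreducible Yetter–Drinfeld module over $\mathbb{C}G$: enumerate $\mathcal{C}=\{t_1=s,\dots,t_M\}$, choose $g_i\in G$ with $g_isg_i^{-1}=t_i$; $M(\mathcal{C},\rho)=\bigoplus_i g_i\otimes V$ with grading $\deg(g_i\otimes v)=t_i$, action $g\cdot(g_i\otimes v)=g_j\otimes\rho(\gamma)v$ where $gg_i=g_j\gamma$, $\gamma\in G^s$, and braiding $c((g_i\otimes v)\otimes(g_j\otimes w))=(g_h\otimes\rho(\gamma)w)\otimes(g_i\otimes v)$ where $t_ig_j=g_h\gamma$, $\gamma\in G^s$. When $\rho$ is one-dimensional, the braiding is called negative if for all $i,j$ with $t_it_j=t_jt_i$, setting $q_{ij}:=\rho(g_j^{-1}t_ig_j)$, one has $q_{ii}=-1$ and $q_{ij}q_{ji}=1$. The centralizer is $\mathbb{S}_{2n}^\pi=\langle A_1,\dots,A_n\rangle\rtimes\langle B_1,\dots,B_{n-1}\rangle\cong\mathbb{Z}_2^n\rtimes\mathbb{S}_n$,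 where $B_j=(2j-1\ \ 2j+1)(2j\ \ 2j+2)$ corresponds to $(j\ j+1)\in\mathbb{S}_n$. $\chi_{(n)}\otimes\epsilon$ (resp. $\chi_{(n)}\otimes\mathrm{sgn}$) is the one-dimensional representation with $A_i\mapsto-1$ for all $i$ and $B_j\mapsto1$ (resp. $B_j\mapsto-1$) for all $j$. *)

theory Defs
  imports Complex_Main "HOL-Combinatorics.Combinatorics"
begin

text \<open>Permutations of {1..2n} are functions nat => nat that permute {1..2*n};
  composition is right to left: (p o q) x = p (q x).\<close>

definition Sym :: "nat \<Rightarrow> (nat \<Rightarrow> nat) set" where
  "Sym n = {p. p permutes {1..2*n}}"

definition Aperm :: "nat \<Rightarrow> nat \<Rightarrow> nat" where
  "Aperm i = transpose (2*i - 1) (2*i)"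

definition Bperm :: "nat \<Rightarrow> nat \<Rightarrow> nat" where
  "Bperm j = transpose (2*j - 1) (2*j + 1) \<circ> transpose (2*j) (2*j + 2)"

definition piperm :: "nat \<Rightarrow> nat \<Rightarrow> nat" where
  "piperm n = foldr (\<lambda>i f. Aperm i \<circ> f) [1..<n+1] id"

definition conj_class :: "('a \<Rightarrow> 'a) set \<Rightarrow> ('a \<Rightarrow> 'a) \<Rightarrow> ('a \<Rightarrow> 'a) set" where
  "conj_class G s = {g \<circ> s \<circ> inv g | g. g \<in> G}"

definition centralizer :: "('a \<Rightarrow> 'a) set \<Rightarrow> ('a \<Rightarrow> 'a) \<Rightarrow> ('a \<Rightarrow> 'a) set" where
  "centralizer G s = {g \<in> G. g \<circ> s = s \<circ> g}"

text \<open>Negative braiding of M(C, rho), rho one-dimensional on the centralizer of s: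
  for every t_i, t_j in the class with t_i t_j = t_j t_i and every choice of
  g_i, g_j in G with g_i s g_i^{-1} = t_i, g_j s g_j^{-1} = t_j, with
  q_ij = rho(g_j^{-1} t_i g_j): q_ii = -1 and q_ij q_ji = 1.\<close>
definition negative_braiding ::
  "('a \<Rightarrow> 'a) set \<Rightarrow> ('a \<Rightarrow> 'a) \<Rightarrow> (('a \<Rightarrow> 'a) \<Rightarrow> complex) \<Rightarrow> bool" where
  "negative_braiding G s \<rho> \<longleftrightarrow>
     (\<forall>t \<in> conj_class G s. \<forall>g \<in> G. g \<circ> s \<circ> inv g = t \<longrightarrow> \<rho> (inv g \<circ> t \<circ> g) = -1) \<and>
     (\<forall>t \<in> conj_class G s. \<forall>u \<in> conj_class G s. \<forall>g \<in> G. \<forall>h \<in> G.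
        t \<circ> u = u \<circ> t \<longrightarrow> g \<circ> s \<circ> inv g = t \<longrightarrow> h \<circ> s \<circ> inv h = u \<longrightarrow>
        \<rho> (inv h \<circ> t \<circ> h) * \<rho> (inv g \<circ> u \<circ> g) = 1)"

end

theory Submission
  imports Defs
begin

lemma inv_perm:
  assumes "\<And>x. f (f x) = x" "\<And>x. x \<notin> S \<Longrightarrow> f x = x"
  shows "f permutes S"
  unfolding permutes_def using assms by metis

lemma foldr_A: "foldr (\<lambda>i f. Aperm i \<circ> f) xs g = foldr (\<lambda>i f. Aperm i \<circ> f) xs id \<circ> g"
  by (induction xs) auto

definition P :: "nat \<Rightarrow> nat \<Rightarrow> nat" where
  "P m = foldr (\<lambda>i f. Aperm i \<circ> f) [1..<m+1] id"

lemma P_Suc: "P (Suc m) = P m \<circ> Aperm (Suc m)"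
  using foldr_A[of "[1..<m+1]" "Aperm (Suc m)"] by (simp add: P_def)

lemma P_formula: "P m p = (if 1 \<le> p \<and> p \<le> 2*m then (if odd p then p+1 else p-1) else p)"
proof (induction m arbitrary: p)
  case 0 then show ?case by (simp add: P_def)
next
  case (Suc m)
  have "P (Suc m) p = P m (Aperm (Suc m) p)" by (simp only: P_Suc comp_apply)
  also have "\<dots> = (let q = Aperm (Suc m) p in if 1 \<le> q \<and> q \<le> 2*m then (if odd q then q+1 else q-1) else q)"
    by (simp only: Suc Let_def)
  finally show ?case
    by (cases "p = 2*m+1"; cases "p = 2*m+2"; auto simp add: Aperm_def transpose_def Let_def)
qed

lemma s_formula: "piperm n p = (if 1 \<le> p \<and> p \<le> 2*n then (if odd p then p+1 else p-1) else p)"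
  unfolding piperm_def P_def[symmetric] by (rule P_formula)

lemma odd_le: "odd (p::nat) \<Longrightarrow> p \<le> 2*n \<Longrightarrow> Suc p \<le> 2*n" by presburger

lemma s_invol: "piperm n (piperm n p) = p"
  unfolding s_formula by (auto simp: odd_le)

lemma s_fpf: "p \<in> {1..2*n} \<Longrightarrow> piperm n p \<noteq> p"
  unfolding s_formula by auto

lemma s_out: "p \<notin> {1..2*n} \<Longrightarrow> piperm n p = p"
  unfolding s_formula by auto

lemma cent_comp: "a \<in> centralizer (Sym n) s \<Longrightarrow> b \<in> centralizer (Sym n) s \<Longrightarrow> a \<circ> b \<in> centralizer (Sym n) s"
  unfolding centralizer_def Sym_def by (auto intro: permutes_compose simp: comp_assoc) (metis comp_assoc)

definition wsw :: "(nat \<Rightarrow> nat) \<Rightarrow> (nat \<Rightarrow> nat) \<Rightarrow> nat \<Rightarrow> nat" where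
  "wsw s y p = (if min p (s (y p)) < min (s p) (y p) then p else s (y p))"

lemma wsw_props:
  assumes ss: "\<And>p. s (s p) = p" and yy: "\<And>p. y (y p) = p" and sy: "\<And>p. s (y p) = y (s p)"
    and fpf: "\<And>p. p \<in> S \<Longrightarrow> s p \<noteq> p \<and> y p \<noteq> p"
    and out: "\<And>p. p \<notin> S \<Longrightarrow> s p = p \<and> y p = p"
  shows "wsw s y (wsw s y p) = p" "wsw s y (s p) = y (wsw s y p)" "p \<notin> S \<Longrightarrow> wsw s y p = p"
proof -
  have e1: "s (y (s (y p))) = p" by (metis ss yy sy)
  have e2: "y (s (y p)) = s p" by (metis ss yy sy)
  show "wsw s y (wsw s y p) = p"
  proof (cases "min p (s (y p)) < min (s p) (y p)")
    case True then have "wsw s y p = p" unfolding wsw_def by (simp only: if_True)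
    then show ?thesis by simp
  next
    case False
    then have "wsw s y p = s (y p)" unfolding wsw_def by (simp only: if_False)
    moreover have "\<not> min (s (y p)) p < min (y p) (s p)" using False by (simp add: min.commute)
    moreover have "wsw s y (s (y p)) = (if min (s (y p)) p < min (y p) (s p) then s (y p) else p)"
      unfolding wsw_def by (simp only: e1 e2 ss)
    ultimately show ?thesis by (simp only: if_not_P if_False)
  qed
  show "p \<notin> S \<Longrightarrow> wsw s y p = p"
    using out[of p] by (simp add: wsw_def)
  show "wsw s y (s p) = y (wsw s y p)"
  proof (cases "p \<in> S")
    case False then show ?thesis using out[of p] by (simp add: wsw_def)
  next
    case True
    then have f: "s p \<noteq> p" "y p \<noteq> p" using fpf by auto
    have f2: "s (y p) \<noteq> y p"
    proof
      assume h: "s (y p) = y p"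
      show False
      proof (cases "y p \<in> S")
        case True then show False using fpf h by blast
      next
        case False then have "y (y p) = y p" using out by blast
        then show False using yy f by metis
      qed
    qed
    have f3: "s (y p) \<noteq> s p" using f yy ss by metis
    have ws: "wsw s y (s p) = (if min (s p) (y p) < min p (s (y p)) then s p else y p)"
      by (simp add: wsw_def ss sy[symmetric] e1)
    show ?thesis
    proof (cases "min p (s (y p)) < min (s p) (y p)")
      case True
      then have "\<not> min (s p) (y p) < min p (s (y p))" by (metis less_not_sym)
      moreover have "wsw s y p = p" using True unfolding wsw_def by (simp only: if_True)
      ultimately show ?thesis by (simp only: ws if_False)
    next
      case F: False
      show ?thesis
      proof (cases "min (s p) (y p) < min p (s (y p))")
        case True
        have "wsw s y p = s (y p)" using F unfolding wsw_def by (simp only: if_False)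
        then show ?thesis using True by (simp only: ws if_True e2)
      next
        case False
        then have "min (s p) (y p) = min p (s (y p))" using F by (meson linorder_neqE_nat)
        then have False using f f2 f3 by (simp add: min_def split: if_splits)
        then show ?thesis ..
      qed
    qed
  qed
qed

lemma cent_inv:
  assumes "a \<in> centralizer (Sym n) s"
  shows "inv a \<in> centralizer (Sym n) s"
proof -
  have ap: "a permutes {1..2*n}" and c: "a \<circ> s = s \<circ> a" using assms by (auto simp: centralizer_def Sym_def)
  have "inv a (s p) = s (inv a p)" for p
  proof -
    have "s p = s (a (inv a p))" by (simp add: permutes_inverses[OF ap])
    also have "\<dots> = a (s (inv a p))" using c by (metis comp_apply)
    finally show ?thesis by (simp add: permutes_inverses[OF ap])
  qed
  then show ?thesis using ap permutes_inv[OF ap] by (auto simp: centralizer_def Sym_def fun_eq_iff)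
qed

lemma s_perm: "piperm n permutes {1..2*n}"
  by (rule inv_perm) (auto simp: s_invol s_out)

lemma A_C: "i \<in> {1..n} \<Longrightarrow> Aperm i \<in> centralizer (Sym n) (piperm n)"
  unfolding centralizer_def Sym_def
  apply (auto simp: Aperm_def intro!: permutes_swap_id)
  apply (auto simp: fun_eq_iff s_formula transpose_def)
  apply presburger+
  done

lemma P_C: "m \<le> n \<Longrightarrow> P m \<in> centralizer (Sym n) (piperm n)"
proof -
  assume mn: "m \<le> n"
  have inv: "P m (P m p) = p" for p
    unfolding P_formula by (auto simp: odd_le)
  have perm: "P m permutes {1..2*n}"
    by (rule inv_perm) (use inv mn in \<open>auto simp: P_formula\<close>)
  have "P m (piperm n p) = piperm n (P m p)" for p
    using mn unfolding P_formula s_formula by (auto simp: odd_le)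
  then show ?thesis using perm by (auto simp: centralizer_def Sym_def fun_eq_iff)
qed

theorem proposition2p4:
  fixes n :: nat and \<rho> :: "(nat \<Rightarrow> nat) \<Rightarrow> complex"
  assumes "odd n" and "n \<ge> 2"
    and hom: "\<forall>x \<in> centralizer (Sym n) (piperm n). \<forall>y \<in> centralizer (Sym n) (piperm n).
                \<rho> (x \<circ> y) = \<rho> x * \<rho> y"
    and A: "\<forall>i \<in> {1..n}. \<rho> (Aperm i) = -1"
    and B: "(\<forall>j \<in> {1..<n}. \<rho> (Bperm j) = 1) \<or> (\<forall>j \<in> {1..<n}. \<rho> (Bperm j) = -1)"
  shows "negative_braiding (Sym n) (piperm n) \<rho>"
proof -
  define s where "s = piperm n"
  define C where "C = centralizer (Sym n) s"
  have hom': "\<And>x y. x \<in> C \<Longrightarrow> y \<in> C \<Longrightarrow> \<rho> (x \<circ> y) = \<rho> x * \<rho> y"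
    using hom unfolding C_def s_def by blast
  have ss: "\<And>p. s (s p) = p" unfolding s_def by (rule s_invol)
  have sperm: "s permutes {1..2*n}" unfolding s_def by (rule s_perm)
  have A1C: "Aperm 1 \<in> C" unfolding C_def s_def using A_C[of 1 n] assms(2) by simp
  have "Aperm 1 \<circ> Aperm 1 = id" by (auto simp: fun_eq_iff Aperm_def transpose_def)
  then have rid: "\<rho> id = 1" using hom'[OF A1C A1C] A assms(2) by auto
  have rP: "m \<le> n \<Longrightarrow> \<rho> (P m) = (-1)^m" for m
  proof (induction m)
    case 0 then show ?case using rid by (simp add: P_def id_def)
  next
    case (Suc m)
    have "P m \<in> C" "Aperm (Suc m) \<in> C" using P_C[of m n] A_C[of "Suc m" n] Suc.prems
      unfolding C_def s_def by auto
    then have "\<rho> (P (Suc m)) = \<rho> (P m) * \<rho> (Aperm (Suc m))" unfolding P_Suc by (rule hom')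
    then show ?case using Suc A by simp
  qed
  have rs: "\<rho> s = -1"
  proof -
    have "s = P n" unfolding s_def piperm_def P_def ..
    then show ?thesis using rP[of n] \<open>odd n\<close> by simp
  qed
  show ?thesis
    unfolding negative_braiding_def s_def[symmetric]
  proof (intro conjI ballI impI)
    fix t g assume g: "g \<in> Sym n" and t: "g \<circ> s \<circ> inv g = t"
    have gp: "g permutes {1..2*n}" using g by (simp add: Sym_def)
    have "inv g \<circ> t \<circ> g = s" unfolding t[symmetric] by (auto simp: fun_eq_iff permutes_inverses[OF gp])
    then show "\<rho> (inv g \<circ> t \<circ> g) = -1" using rs by simp
  next
    fix t u g h
    assume g: "g \<in> Sym n" and h: "h \<in> Sym n" and tu: "t \<circ> u = u \<circ> t"
      and t: "g \<circ> s \<circ> inv g = t" and u: "h \<circ> s \<circ> inv h = u"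
    have gp: "g permutes {1..2*n}" using g by (simp add: Sym_def)
    have hp: "h permutes {1..2*n}" using h by (simp add: Sym_def)
    define Y where "Y = inv h \<circ> t \<circ> h"
    define Z where "Z = inv g \<circ> u \<circ> g"
    have tp: "t p = g (s (inv g p))" for p using t by auto
    have up: "u p = h (s (inv h p))" for p using u by auto
    have Yp: "Y p = inv h (g (s (inv g (h p))))" for p by (simp add: Y_def tp)
    have Zp: "Z p = inv g (h (s (inv h (g p))))" for p by (simp add: Z_def up)
    have Yperm: "Y permutes {1..2*n}" unfolding Y_def t[symmetric]
      by (intro permutes_compose permutes_inv gp hp sperm)
    have Zperm: "Z permutes {1..2*n}" unfolding Z_def u[symmetric]
      by (intro permutes_compose permutes_inv gp hp sperm)
    have YY: "Y (Y p) = p" for p by (simp add: Yp permutes_inverses[OF gp] permutes_inverses[OF hp] ss)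
    have tu': "t (u p) = u (t p)" for p using tu by (metis comp_apply)
    have Ys: "Y (s p) = s (Y p)" for p
    proof -
      have "t (h (s p)) = h (s (inv h (t (h p))))"
        using tu'[of "h p"] by (simp add: up permutes_inverses[OF hp])
      then show ?thesis unfolding Y_def comp_apply
        by (metis permutes_inverses(2)[OF hp])
    qed
    have Zs: "Z (s p) = s (Z p)" for p
    proof -
      have "u (g (s p)) = g (s (inv g (u (g p))))"
        using tu'[of "g p"] by (simp add: tp permutes_inverses[OF gp])
      then show ?thesis unfolding Z_def comp_apply
        by (metis permutes_inverses(2)[OF gp])
    qed
    have Yfpf: "p \<in> {1..2*n} \<Longrightarrow> Y p \<noteq> p" for p
    proof
      assume pS: "p \<in> {1..2*n}" and e: "Y p = p"
      have "inv g (h p) \<in> {1..2*n}"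
        using pS permutes_in_image[OF hp] permutes_in_image[OF permutes_inv[OF gp]] by auto
      moreover have "s (inv g (h p)) = inv g (h p)" using e unfolding Yp
        by (metis permutes_inverses[OF gp] permutes_inverses[OF hp])
      ultimately show False using s_fpf[of "inv g (h p)" n] unfolding s_def by blast
    qed
    have sfpf: "p \<in> {1..2*n} \<Longrightarrow> s p \<noteq> p" for p unfolding s_def by (rule s_fpf)
    have Yout: "p \<notin> {1..2*n} \<Longrightarrow> Y p = p" for p using Yperm permutes_not_in by metis
    have sout: "p \<notin> {1..2*n} \<Longrightarrow> s p = p" for p using sperm permutes_not_in by metis
    define w where "w = wsw s Y"
    note W = wsw_props[of s Y "{1..2*n}", OF ss YY, folded w_def]
    have ww: "w (w p) = p" and ws: "w (s p) = Y (w p)" and wout: "p \<notin> {1..2*n} \<Longrightarrow> w p = p" for p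
      using W[of p] Ys sfpf Yfpf sout Yout by auto
    have wY: "w (Y p) = s (w p)" for p
      by (metis ww ws)
    have wperm: "w permutes {1..2*n}" by (rule inv_perm) (use ww wout in auto)
    define c where "c = inv g \<circ> h \<circ> w"
    have cperm: "c permutes {1..2*n}" unfolding c_def
      by (intro permutes_compose permutes_inv gp hp wperm)
    have cs: "c (s p) = s (c p)" for p
      by (simp add: c_def ws Yp permutes_inverses[OF gp] permutes_inverses[OF hp])
    have cC: "c \<in> C" using cperm cs by (auto simp: C_def centralizer_def Sym_def fun_eq_iff)
    have YC: "Y \<in> C" using Yperm Ys by (auto simp: C_def centralizer_def Sym_def fun_eq_iff)
    have icC: "inv c \<in> C" using cent_inv cC unfolding C_def by blast
    have ZcY: "Z (c p) = c (Y p)" for p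
      by (simp add: c_def Zp wY permutes_inverses[OF gp] permutes_inverses[OF hp])
    have Zeq: "Z = c \<circ> (Y \<circ> inv c)"
    proof
      fix p
      have "Z p = Z (c (inv c p))" by (simp add: permutes_inverses[OF cperm])
      then show "Z p = (c \<circ> (Y \<circ> inv c)) p" by (simp add: ZcY)
    qed
    have YiC: "Y \<circ> inv c \<in> C" using cent_comp YC icC unfolding C_def by blast
    have cic: "c \<circ> inv c = id" using permutes_inv_o(1)[OF cperm] .
    have "\<rho> Z = \<rho> c * \<rho> Y * \<rho> (inv c)" using Zeq hom'[OF cC YiC] hom'[OF YC icC] by simp
    also have "\<dots> = \<rho> Y * (\<rho> c * \<rho> (inv c))" by simp
    also have "\<rho> c * \<rho> (inv c) = 1" using hom'[OF cC icC] cic rid by simp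
    finally have rZ: "\<rho> Z = \<rho> Y" by simp
    have "Y \<circ> Y = id" using YY by (auto simp: fun_eq_iff)
    then have "\<rho> Y * \<rho> Y = 1" using hom'[OF YC YC] rid by simp
    then show "\<rho> (inv h \<circ> t \<circ> h) * \<rho> (inv g \<circ> u \<circ> g) = 1"
      using rZ unfolding Y_def Z_def by simp
  qed
qed

end
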